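(* Fix $n\ge1$, $\theta\in(1/2,7/8]$, $h_1\in[0,1]$, $\alpha\in[0,1]$, an integer $k\ge1$ and $[\underline h,\bar h]\subset(0,1)$. Fix any realization of the couplings $J_X\ge0$ (so that both GKS inequalities hold). Then $$\int_{\underline h}^{\bar h}dh_0\,\mathbb E_{\boldsymbol\tau}\big[(\langle Q_k\rangle_{h_0,h_1,\alpha}-\mathbb E_{\boldsymbol\tau}\langle Q_k\rangle_{h_0,h_1,\alpha})^2\big]\le\frac{\alpha kh_1}{n^{1-\theta}}.$$
   Context: Spins $\boldsymbol\sigma\in\{-1,1\}^n$, $\sigma_X=\prod_{i\in X}\sigma_i$. $\tau_1,\dots,\tau_n$ are i.i.d. Poisson with mean $\alpha n^{\theta-1}$, and $\mathbb E_{\boldsymbol\tau}$ denotes expectation over $\boldsymbol\tau$ only. Hamiltonian $\mathcal H(\boldsymbol\sigma)=-\sum_{X\subset\{1,\dots,n\}}J_X\sigma_X-h_0\sum_i\sigma_i-h_1\sum_i\tau_i\sigma_i$, Gibbs expectation $\langle\cdot\rangle_{h_0,h_1,\alpha}$; for $k$ replicas, $\langle\cdot\rangle$ is the expectation under the product of $k$ independent copies of the Gibbs measure. $Q_k=\frac1n\sum_i\sigma_i^{(1)}\cdots\sigma_i^{(k)}$, so $\langle Q_k\rangle=\frac1n\sum_i\langle\sigma_i\rangle^k$. GKS inequalities: $\langle\sigma_T\rangle\ge0$ and $\langle\sigma_T\sigma_S\rangle-\langle\sigma_T\rangle\langle\sigma_S\rangle\ge0$ for all $T,S\subset\{1,\dots,n\}$.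 *)

theory Defs
  imports "HOL-Analysis.Analysis" "HOL-Probability.Probability"
begin

text \<open>Spin configurations on sites 0..n-1 (indices shifted from 1..n), values in {-1,1}.\<close>
definition spins :: "nat \<Rightarrow> (nat \<Rightarrow> real) set" where
  "spins n = PiE {0..<n} (\<lambda>_. {-1, 1})"

definition spin_prod :: "(nat \<Rightarrow> real) \<Rightarrow> nat set \<Rightarrow> real" where
  "spin_prod \<sigma> X = (\<Prod>i\<in>X. \<sigma> i)"

definition hamiltonian ::
  "nat \<Rightarrow> (nat set \<Rightarrow> real) \<Rightarrow> real \<Rightarrow> real \<Rightarrow> (nat \<Rightarrow> nat) \<Rightarrow> (nat \<Rightarrow> real) \<Rightarrow> real" where
  "hamiltonian n J h0 h1 \<tau> \<sigma> =
     - (\<Sum>X\<in>Pow {0..<n}. J X * spin_prod \<sigma> X)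
     - h0 * (\<Sum>i<n. \<sigma> i) - h1 * (\<Sum>i<n. real (\<tau> i) * \<sigma> i)"

definition gibbs ::
  "nat \<Rightarrow> (nat set \<Rightarrow> real) \<Rightarrow> real \<Rightarrow> real \<Rightarrow> (nat \<Rightarrow> nat) \<Rightarrow> ((nat \<Rightarrow> real) \<Rightarrow> real) \<Rightarrow> real" where
  "gibbs n J h0 h1 \<tau> f =
     (\<Sum>\<sigma>\<in>spins n. f \<sigma> * exp (- hamiltonian n J h0 h1 \<tau> \<sigma>)) /
     (\<Sum>\<sigma>\<in>spins n. exp (- hamiltonian n J h0 h1 \<tau> \<sigma>))"

definition overlap_avg ::
  "nat \<Rightarrow> nat \<Rightarrow> (nat set \<Rightarrow> real) \<Rightarrow> real \<Rightarrow> real \<Rightarrow> (nat \<Rightarrow> nat) \<Rightarrow> real" where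
  "overlap_avg n k J h0 h1 \<tau> = (1 / real n) * (\<Sum>i<n. (gibbs n J h0 h1 \<tau> (\<lambda>\<sigma>. \<sigma> i)) ^ k)"

text \<open>Poisson distribution with mean r (point mass at 0 when r = 0).\<close>
definition pois :: "real \<Rightarrow> nat pmf" where
  "pois r = (if 0 < r then poisson_pmf r else return_pmf 0)"

definition tau_law :: "nat \<Rightarrow> real \<Rightarrow> real \<Rightarrow> (nat \<Rightarrow> nat) pmf" where
  "tau_law n \<alpha> \<theta> = Pi_pmf {0..<n} 0 (\<lambda>_. pois (\<alpha> * real n powr (\<theta> - 1)))"

definition E_tau :: "nat \<Rightarrow> real \<Rightarrow> real \<Rightarrow> ((nat \<Rightarrow> nat) \<Rightarrow> real) \<Rightarrow> real" where
  "E_tau n \<alpha> \<theta> g = measure_pmf.expectation (tau_law n \<alpha> \<theta>) g"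

end

theory Submission
  imports Defs
begin

lemma spins_finite: "finite (spins n)"
  unfolding spins_def by (auto intro!: finite_PiE)

lemma spins_val: "\<sigma> \<in> spins n \<Longrightarrow> i < n \<Longrightarrow> \<sigma> i = -1 \<or> \<sigma> i = 1"
  unfolding spins_def by (auto simp: PiE_iff)

lemma spins_out: "\<sigma> \<in> spins n \<Longrightarrow> \<not> i < n \<Longrightarrow> \<sigma> i = undefined"
  unfolding spins_def by (auto simp: PiE_def extensional_def)

lemma spins_sq: "\<sigma> \<in> spins n \<Longrightarrow> i < n \<Longrightarrow> \<sigma> i * \<sigma> i = 1"
  using spins_val by fastforce

lemma spins_nonempty: "restrict (\<lambda>_. 1) {0..<n} \<in> spins n"
  unfolding spins_def by auto

lemma sp_sq: assumes "\<sigma> \<in> spins n" "X \<subseteq> {0..<n}"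
  shows "spin_prod \<sigma> X * spin_prod \<sigma> X = 1"
proof -
  have "spin_prod \<sigma> X * spin_prod \<sigma> X = (\<Prod>i\<in>X. \<sigma> i * \<sigma> i)"
    unfolding spin_prod_def by (simp add: prod.distrib)
  also have "\<dots> = 1" using assms by (intro prod.neutral) (force intro: spins_sq)
  finally show ?thesis .
qed

lemma sp_pm: assumes "\<sigma> \<in> spins n" "X \<subseteq> {0..<n}"
  shows "spin_prod \<sigma> X = 1 \<or> spin_prod \<sigma> X = -1"
proof -
  have "spin_prod \<sigma> X * spin_prod \<sigma> X = 1" by (rule sp_sq[OF assms])
  then show ?thesis by (metis square_eq_1_iff)
qed

lemma sp_mult: assumes "\<sigma> \<in> spins n" "T \<subseteq> {0..<n}" "S \<subseteq> {0..<n}"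
  shows "spin_prod \<sigma> T * spin_prod \<sigma> S = spin_prod \<sigma> ((T - S) \<union> (S - T))"
proof -
  have fT: "finite T" "finite S" using assms finite_subset by blast+
  have a: "spin_prod \<sigma> T = spin_prod \<sigma> (T \<inter> S) * spin_prod \<sigma> (T - S)"
    unfolding spin_prod_def by (rule prod.Int_Diff[OF fT(1)])
  have b: "spin_prod \<sigma> S = spin_prod \<sigma> (T \<inter> S) * spin_prod \<sigma> (S - T)"
    unfolding spin_prod_def using fT by (subst prod.Int_Diff[of S _ T]) (auto simp: Int_commute)
  have c: "spin_prod \<sigma> ((T - S) \<union> (S - T)) = spin_prod \<sigma> (T - S) * spin_prod \<sigma> (S - T)"
    unfolding spin_prod_def using fT by (intro prod.union_disjoint) auto
  have d: "spin_prod \<sigma> (T \<inter> S) * spin_prod \<sigma> (T \<inter> S) = 1"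
    using assms by (intro sp_sq) auto
  show ?thesis unfolding a b c using d
    by (metis (no_types, lifting) mult.assoc mult.commute mult.left_neutral)
qed

definition sflip :: "nat \<Rightarrow> (nat \<Rightarrow> real) \<Rightarrow> nat \<Rightarrow> real" where
  "sflip t \<sigma> = \<sigma>(t := - \<sigma> t)"

lemma flip_spins: "\<sigma> \<in> spins n \<Longrightarrow> t < n \<Longrightarrow> sflip t \<sigma> \<in> spins n"
  unfolding spins_def sflip_def by (auto simp: PiE_iff extensional_def)

lemma flip_flip: "sflip t (sflip t \<sigma>) = \<sigma>"
  unfolding sflip_def by auto

lemma sp_flip: assumes "t \<in> T" "finite T"
  shows "spin_prod (sflip t \<sigma>) T = - spin_prod \<sigma> T"
proof -
  have "spin_prod (sflip t \<sigma>) T = sflip t \<sigma> t * (\<Prod>i\<in>T - {t}. sflip t \<sigma> i)"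
    unfolding spin_prod_def using assms by (simp add: prod.remove)
  also have "(\<Prod>i\<in>T - {t}. sflip t \<sigma> i) = (\<Prod>i\<in>T - {t}. \<sigma> i)"
    by (rule prod.cong) (auto simp: sflip_def)
  also have "sflip t \<sigma> t * (\<Prod>i\<in>T - {t}. \<sigma> i) = - (\<sigma> t * (\<Prod>i\<in>T - {t}. \<sigma> i))"
    by (simp add: sflip_def)
  also have "\<sigma> t * (\<Prod>i\<in>T - {t}. \<sigma> i) = spin_prod \<sigma> T"
    unfolding spin_prod_def using assms by (simp add: prod.remove)
  finally show ?thesis .
qed

lemma parity: assumes "T \<subseteq> {0..<n}"
  shows "0 \<le> (\<Sum>\<sigma>\<in>spins n. spin_prod \<sigma> T)"
proof (cases "T = {}")
  case True then show ?thesis by (simp add: spin_prod_def)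
next
  case False
  then obtain t where t: "t \<in> T" by auto
  with assms have tn: "t < n" by auto
  have fT: "finite T" using assms finite_subset by blast
  have "(\<Sum>\<sigma>\<in>spins n. spin_prod \<sigma> T) = (\<Sum>\<sigma>\<in>spins n. spin_prod (sflip t \<sigma>) T)"
    by (rule sum.reindex_bij_witness[of _ "sflip t" "sflip t"])
       (auto simp: flip_flip flip_spins tn)
  also have "\<dots> = - (\<Sum>\<sigma>\<in>spins n. spin_prod \<sigma> T)"
    using sp_flip[OF t fT] by (simp add: sum_negf)
  finally show ?thesis by simp
qed

lemma exp_pm: fixes c s :: real assumes "s = 1 \<or> s = -1"
  shows "exp (c * s) = cosh c + s * sinh c"
  using assms by (auto simp: cosh_def sinh_def field_simps real_scaleR_def)

lemma gks_step:
  assumes IH: "\<And>T. T \<subseteq> {0..<n} \<Longrightarrow> 0 \<le> (\<Sum>\<sigma>\<in>spins n. spin_prod \<sigma> T * exp (E \<sigma>))"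
    and S: "S \<subseteq> {0..<n}" and c: "0 \<le> c" and T: "T \<subseteq> {0..<n}"
  shows "0 \<le> (\<Sum>\<sigma>\<in>spins n. spin_prod \<sigma> T * exp (c * spin_prod \<sigma> S + E \<sigma>))"
proof -
  have "(\<Sum>\<sigma>\<in>spins n. spin_prod \<sigma> T * exp (c * spin_prod \<sigma> S + E \<sigma>))
     = (\<Sum>\<sigma>\<in>spins n. cosh c * (spin_prod \<sigma> T * exp (E \<sigma>)) + sinh c * (spin_prod \<sigma> ((T - S) \<union> (S - T)) * exp (E \<sigma>)))"
  proof (rule sum.cong[OF refl])
    fix \<sigma> assume s: "\<sigma> \<in> spins n"
    have "exp (c * spin_prod \<sigma> S + E \<sigma>) = (cosh c + spin_prod \<sigma> S * sinh c) * exp (E \<sigma>)"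
      using exp_pm[OF sp_pm[OF s S]] by (simp add: exp_add)
    then show "spin_prod \<sigma> T * exp (c * spin_prod \<sigma> S + E \<sigma>) =
      cosh c * (spin_prod \<sigma> T * exp (E \<sigma>)) + sinh c * (spin_prod \<sigma> ((T - S) \<union> (S - T)) * exp (E \<sigma>))"
      using sp_mult[OF s T S] by (simp add: algebra_simps)
  qed
  also have "\<dots> = cosh c * (\<Sum>\<sigma>\<in>spins n. spin_prod \<sigma> T * exp (E \<sigma>)) + sinh c * (\<Sum>\<sigma>\<in>spins n. spin_prod \<sigma> ((T - S) \<union> (S - T)) * exp (E \<sigma>))"
    by (simp add: sum.distrib sum_distrib_left)
  also have "0 \<le> \<dots>"
    using IH[OF T] IH[of "(T - S) \<union> (S - T)"] S T c
    by (intro add_nonneg_nonneg mult_nonneg_nonneg) (auto simp: cosh_real_nonneg_le_iff)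
  finally show ?thesis .
qed

lemma gks_A:
  assumes "finite P"
  shows "P \<subseteq> Pow {0..<n} \<Longrightarrow> (\<forall>X\<in>P. 0 \<le> c X) \<Longrightarrow> T \<subseteq> {0..<n} \<Longrightarrow>
     0 \<le> (\<Sum>\<sigma>\<in>spins n. spin_prod \<sigma> T * exp (\<Sum>X\<in>P. c X * spin_prod \<sigma> X))"
  using assms
proof (induction P arbitrary: T rule: finite_induct)
  case empty
  then show ?case using parity[of T n] by simp
next
  case (insert x F)
  have "0 \<le> (\<Sum>\<sigma>\<in>spins n. spin_prod \<sigma> T * exp (c x * spin_prod \<sigma> x + (\<Sum>X\<in>F. c X * spin_prod \<sigma> X)))"
    using insert by (intro gks_step[where E="\<lambda>\<sigma>. (\<Sum>X\<in>F. c X * spin_prod \<sigma> X)"]) auto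
  then show ?case using insert by simp
qed

definition wexp :: "nat \<Rightarrow> (nat set \<Rightarrow> real) \<Rightarrow> (nat \<Rightarrow> real) \<Rightarrow> (nat \<Rightarrow> real) \<Rightarrow> real" where
  "wexp n J b \<sigma> = (\<Sum>X\<in>Pow {0..<n}. J X * spin_prod \<sigma> X) + (\<Sum>k<n. b k * \<sigma> k)"

lemma gks_B:
  assumes "finite K"
  shows "K \<subseteq> {..<n} \<Longrightarrow> (\<forall>X\<in>Pow {0..<n}. 0 \<le> J X) \<Longrightarrow> (\<forall>k\<in>K. 0 \<le> b k) \<Longrightarrow> T \<subseteq> {0..<n} \<Longrightarrow>
     0 \<le> (\<Sum>\<sigma>\<in>spins n. spin_prod \<sigma> T * exp ((\<Sum>X\<in>Pow {0..<n}. J X * spin_prod \<sigma> X) + (\<Sum>k\<in>K. b k * \<sigma> k)))"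
  using assms
proof (induction K arbitrary: T rule: finite_induct)
  case empty
  then show ?case using gks_A[where P="Pow {0..<n}" and c=J and T=T and n=n] by simp
next
  case (insert x F)
  have "0 \<le> (\<Sum>\<sigma>\<in>spins n. spin_prod \<sigma> T * exp (b x * spin_prod \<sigma> {x} + ((\<Sum>X\<in>Pow {0..<n}. J X * spin_prod \<sigma> X) + (\<Sum>k\<in>F. b k * \<sigma> k))))"
    using insert by (intro gks_step[where E="\<lambda>\<sigma>. (\<Sum>X\<in>Pow {0..<n}. J X * spin_prod \<sigma> X) + (\<Sum>k\<in>F. b k * \<sigma> k)"]) auto
  then show ?case using insert by (simp add: spin_prod_def algebra_simps)
qed

lemma gks1:
  assumes "\<And>X. X \<subseteq> {0..<n} \<Longrightarrow> 0 \<le> J X" "\<And>k. k < n \<Longrightarrow> 0 \<le> b k" "T \<subseteq> {0..<n}"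
  shows "0 \<le> (\<Sum>\<sigma>\<in>spins n. spin_prod \<sigma> T * exp (wexp n J b \<sigma>))"
  unfolding wexp_def using assms by (intro gks_B) auto

definition smul :: "nat \<Rightarrow> (nat \<Rightarrow> real) \<Rightarrow> (nat \<Rightarrow> real) \<Rightarrow> nat \<Rightarrow> real" where
  "smul n \<sigma> \<rho> = (\<lambda>k. if k < n then \<sigma> k * \<rho> k else undefined)"

lemma smul_spins: "\<sigma> \<in> spins n \<Longrightarrow> \<rho> \<in> spins n \<Longrightarrow> smul n \<sigma> \<rho> \<in> spins n"
proof -
  have pm: "x * y = -1 \<or> x * y = 1" if "x = -1 \<or> x = 1" "y = -1 \<or> y = (1::real)" for x y
    using that by auto
  assume a: "\<sigma> \<in> spins n" "\<rho> \<in> spins n"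
  then show ?thesis
    unfolding spins_def smul_def using pm by (auto simp: PiE_iff extensional_def)
qed

lemma smul_inv: "\<sigma> \<in> spins n \<Longrightarrow> \<rho> \<in> spins n \<Longrightarrow> smul n \<sigma> (smul n \<sigma> \<rho>) = \<rho>"
  unfolding smul_def using spins_sq[of \<sigma> n] spins_out[of \<rho> n]
  by (auto simp: fun_eq_iff mult.assoc[symmetric])

lemma sp_smul: "X \<subseteq> {0..<n} \<Longrightarrow> spin_prod (smul n \<sigma> \<rho>) X = spin_prod \<sigma> X * spin_prod \<rho> X"
  unfolding spin_prod_def smul_def by (subst prod.distrib[symmetric]) (rule prod.cong, auto)

lemma wexp_smul:
  assumes "\<sigma> \<in> spins n" "\<rho> \<in> spins n"
  shows "wexp n J b \<sigma> + wexp n J b (smul n \<sigma> \<rho>) =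
     wexp n (\<lambda>X. J X * (1 + spin_prod \<rho> X)) (\<lambda>k. b k * (1 + \<rho> k)) \<sigma>"
proof -
  have "(\<Sum>X\<in>Pow {0..<n}. J X * spin_prod (smul n \<sigma> \<rho>) X) = (\<Sum>X\<in>Pow {0..<n}. J X * spin_prod \<sigma> X * spin_prod \<rho> X)"
    by (rule sum.cong) (auto simp: sp_smul)
  moreover have "(\<Sum>k<n. b k * smul n \<sigma> \<rho> k) = (\<Sum>k<n. b k * \<sigma> k * \<rho> k)"
    by (rule sum.cong) (auto simp: smul_def)
  ultimately show ?thesis unfolding wexp_def
    by (simp add: algebra_simps sum.distrib)
qed

lemma double_expand:
  fixes a b w :: "(nat \<Rightarrow> real) \<Rightarrow> real" and S :: "(nat \<Rightarrow> real) set"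
  shows "(\<Sum>x\<in>S. \<Sum>y\<in>S. (a x - a y) * (b x - b y) * (w x * w y)) =
    2 * ((\<Sum>x\<in>S. w x) * (\<Sum>x\<in>S. a x * b x * w x) - (\<Sum>x\<in>S. a x * w x) * (\<Sum>x\<in>S. b x * w x))"
proof -
  have "(\<Sum>x\<in>S. \<Sum>y\<in>S. (a x - a y) * (b x - b y) * (w x * w y)) =
     (\<Sum>x\<in>S. \<Sum>y\<in>S. (a x * b x * w x) * w y + w x * (a y * b y * w y) - (a x * w x) * (b y * w y) - (b x * w x) * (a y * w y))"
    by (intro sum.cong refl) (simp add: algebra_simps)
  also have "\<dots> = (\<Sum>x\<in>S. a x * b x * w x) * (\<Sum>x\<in>S. w x) + (\<Sum>x\<in>S. w x) * (\<Sum>x\<in>S. a x * b x * w x)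
      - (\<Sum>x\<in>S. a x * w x) * (\<Sum>x\<in>S. b x * w x) - (\<Sum>x\<in>S. b x * w x) * (\<Sum>x\<in>S. a x * w x)"
    by (simp add: sum.distrib sum_subtractf sum_product)
  finally show ?thesis by (simp add: algebra_simps)
qed

lemma gks2:
  assumes J: "\<And>X. X \<subseteq> {0..<n} \<Longrightarrow> 0 \<le> J X" and b: "\<And>k. k < n \<Longrightarrow> 0 \<le> b k" and ij: "i < n" "j < n"
  shows "0 \<le> (\<Sum>\<sigma>\<in>spins n. exp (wexp n J b \<sigma>)) * (\<Sum>\<sigma>\<in>spins n. \<sigma> i * \<sigma> j * exp (wexp n J b \<sigma>))
       - (\<Sum>\<sigma>\<in>spins n. \<sigma> i * exp (wexp n J b \<sigma>)) * (\<Sum>\<sigma>\<in>spins n. \<sigma> j * exp (wexp n J b \<sigma>))"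
proof -
  let ?S = "spins n"
  let ?w = "\<lambda>\<sigma>. exp (wexp n J b \<sigma>)"
  let ?F = "\<lambda>x y. (x i - y i) * (x j - y j) * (?w x * ?w y)"
  let ?T = "({i} - {j}) \<union> ({j} - {i})"
  have "(\<Sum>x\<in>?S. \<Sum>y\<in>?S. ?F x y) = (\<Sum>x\<in>?S. \<Sum>\<rho>\<in>?S. ?F x (smul n x \<rho>))"
  proof (rule sum.cong[OF refl])
    fix x assume x: "x \<in> ?S"
    show "(\<Sum>y\<in>?S. ?F x y) = (\<Sum>\<rho>\<in>?S. ?F x (smul n x \<rho>))"
      by (rule sum.reindex_bij_witness[of _ "smul n x" "smul n x"])
         (auto simp: smul_inv smul_spins x)
  qed
  also have "\<dots> = (\<Sum>\<rho>\<in>?S. \<Sum>x\<in>?S. ?F x (smul n x \<rho>))" by (rule sum.swap)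
  also have "0 \<le> \<dots>"
  proof (rule sum_nonneg)
    fix \<rho> assume r: "\<rho> \<in> ?S"
    have "(\<Sum>x\<in>?S. ?F x (smul n x \<rho>)) = (1 - \<rho> i) * (1 - \<rho> j) *
       (\<Sum>x\<in>?S. spin_prod x ?T * exp (wexp n (\<lambda>X. J X * (1 + spin_prod \<rho> X)) (\<lambda>k. b k * (1 + \<rho> k)) x))"
    proof -
      have "?F x (smul n x \<rho>) = (1 - \<rho> i) * (1 - \<rho> j) *
        (spin_prod x ?T * exp (wexp n (\<lambda>X. J X * (1 + spin_prod \<rho> X)) (\<lambda>k. b k * (1 + \<rho> k)) x))"
        if x: "x \<in> ?S" for x
      proof -
        have "spin_prod x ?T = spin_prod x {i} * spin_prod x {j}"
          using sp_mult[OF x, of "{i}" "{j}"] ij by auto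
        also have "\<dots> = x i * x j" by (simp add: spin_prod_def)
        finally have 1: "spin_prod x ?T = x i * x j" .
        have 2: "?w x * ?w (smul n x \<rho>) = exp (wexp n (\<lambda>X. J X * (1 + spin_prod \<rho> X)) (\<lambda>k. b k * (1 + \<rho> k)) x)"
          using wexp_smul[OF x r] by (simp add: exp_add[symmetric])
        show ?thesis unfolding 1 2[symmetric] using ij by (simp add: smul_def algebra_simps)
      qed
      then show ?thesis by (simp add: sum_distrib_left)
    qed
    also have "0 \<le> \<dots>"
    proof (intro mult_nonneg_nonneg)
      show "0 \<le> 1 - \<rho> i" "0 \<le> 1 - \<rho> j" using spins_val[OF r] ij by fastforce+
      show "0 \<le> (\<Sum>x\<in>?S. spin_prod x ?T * exp (wexp n (\<lambda>X. J X * (1 + spin_prod \<rho> X)) (\<lambda>k. b k * (1 + \<rho> k)) x))"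
      proof (rule gks1)
        fix X assume X: "X \<subseteq> {0..<n}" show "0 \<le> J X * (1 + spin_prod \<rho> X)"
          using sp_pm[OF r X] J[OF X] by auto
      next
        fix k assume "k < n" then show "0 \<le> b k * (1 + \<rho> k)" using b spins_val[OF r] by fastforce
      next
        show "?T \<subseteq> {0..<n}" using ij by auto
      qed
    qed
    finally show "0 \<le> (\<Sum>x\<in>?S. ?F x (smul n x \<rho>))" .
  qed
  finally show ?thesis using double_expand[of "\<lambda>x. x i" "\<lambda>x. x j" ?w ?S] by simp
qed

definition Zf :: "nat \<Rightarrow> (nat set \<Rightarrow> real) \<Rightarrow> (nat \<Rightarrow> real) \<Rightarrow> real" where
  "Zf n J b = (\<Sum>\<sigma>\<in>spins n. exp (wexp n J b \<sigma>))"

definition avg :: "nat \<Rightarrow> (nat set \<Rightarrow> real) \<Rightarrow> (nat \<Rightarrow> real) \<Rightarrow> ((nat \<Rightarrow> real) \<Rightarrow> real) \<Rightarrow> real" where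
  "avg n J b f = (\<Sum>\<sigma>\<in>spins n. f \<sigma> * exp (wexp n J b \<sigma>)) / Zf n J b"

definition mg :: "nat \<Rightarrow> (nat set \<Rightarrow> real) \<Rightarrow> (nat \<Rightarrow> real) \<Rightarrow> nat \<Rightarrow> real" where
  "mg n J b j = avg n J b (\<lambda>\<sigma>. \<sigma> j)"

lemma Zf_pos: "0 < Zf n J b"
  unfolding Zf_def using spins_nonempty[of n] spins_finite[of n]
  by (intro sum_pos) auto

lemma gibbs_eq: "gibbs n J h0 h1 \<tau> f = avg n J (\<lambda>k. h0 + h1 * real (\<tau> k)) f"
proof -
  have "- hamiltonian n J h0 h1 \<tau> \<sigma> = wexp n J (\<lambda>k. h0 + h1 * real (\<tau> k)) \<sigma>" for \<sigma>
  proof -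
    have "(\<Sum>k<n. (h0 + h1 * real (\<tau> k)) * \<sigma> k) = h0 * (\<Sum>k<n. \<sigma> k) + h1 * (\<Sum>k<n. real (\<tau> k) * \<sigma> k)"
      by (simp add: distrib_right sum.distrib sum_distrib_left mult.assoc)
    then show ?thesis unfolding hamiltonian_def wexp_def by linarith
  qed
  then show ?thesis unfolding gibbs_def avg_def Zf_def by simp
qed

lemma wexp_local: "(\<And>k. k < n \<Longrightarrow> b k = b' k) \<Longrightarrow> wexp n J b = wexp n J b'"
  unfolding wexp_def by (intro ext) simp

lemma mg_local: "(\<And>k. k < n \<Longrightarrow> b k = b' k) \<Longrightarrow> mg n J b j = mg n J b' j"
  unfolding mg_def avg_def Zf_def using wexp_local[of n b b' J] by simp

lemma mg_abs: assumes "j < n" shows "\<bar>mg n J b j\<bar> \<le> 1"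
proof -
  have "\<bar>\<Sum>\<sigma>\<in>spins n. \<sigma> j * exp (wexp n J b \<sigma>)\<bar> \<le> (\<Sum>\<sigma>\<in>spins n. \<bar>\<sigma> j * exp (wexp n J b \<sigma>)\<bar>)"
    by (rule sum_abs)
  also have "\<dots> = Zf n J b" unfolding Zf_def
    by (rule sum.cong[OF refl]) (use spins_val[OF _ assms] in \<open>force simp: abs_mult\<close>)
  finally have le: "\<bar>\<Sum>\<sigma>\<in>spins n. \<sigma> j * exp (wexp n J b \<sigma>)\<bar> \<le> Zf n J b" .
  have Z: "0 < Zf n J b" by (rule Zf_pos)
  show ?thesis unfolding mg_def avg_def using Z le
    by (metis abs_divide abs_of_pos divide_le_eq_1_pos)
qed

lemma mg_nonneg:
  assumes "\<And>X. X \<subseteq> {0..<n} \<Longrightarrow> 0 \<le> J X" "\<And>k. k < n \<Longrightarrow> 0 \<le> b k" "j < n"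
  shows "0 \<le> mg n J b j"
proof -
  have "0 \<le> (\<Sum>\<sigma>\<in>spins n. spin_prod \<sigma> {j} * exp (wexp n J b \<sigma>))"
    by (rule gks1[OF assms(1) assms(2)]) (use assms(3) in auto)
  then show ?thesis using Zf_pos[of n J b] unfolding mg_def avg_def by (simp add: spin_prod_def)
qed

lemma cov_nonneg:
  assumes "\<And>X. X \<subseteq> {0..<n} \<Longrightarrow> 0 \<le> J X" "\<And>k. k < n \<Longrightarrow> 0 \<le> b k" "i < n" "j < n"
  shows "0 \<le> avg n J b (\<lambda>\<sigma>. \<sigma> j * \<sigma> i) - mg n J b j * mg n J b i"
proof -
  let ?Z = "Zf n J b"
  have "0 \<le> ?Z * (\<Sum>\<sigma>\<in>spins n. \<sigma> j * \<sigma> i * exp (wexp n J b \<sigma>))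
       - (\<Sum>\<sigma>\<in>spins n. \<sigma> j * exp (wexp n J b \<sigma>)) * (\<Sum>\<sigma>\<in>spins n. \<sigma> i * exp (wexp n J b \<sigma>))"
    unfolding Zf_def by (rule gks2[OF assms(1) assms(2) assms(4) assms(3)])
  then have "0 \<le> (?Z * (\<Sum>\<sigma>\<in>spins n. \<sigma> j * \<sigma> i * exp (wexp n J b \<sigma>))
       - (\<Sum>\<sigma>\<in>spins n. \<sigma> j * exp (wexp n J b \<sigma>)) * (\<Sum>\<sigma>\<in>spins n. \<sigma> i * exp (wexp n J b \<sigma>))) / (?Z * ?Z)"
    by (rule divide_nonneg_nonneg) auto
  also have "\<dots> = avg n J b (\<lambda>\<sigma>. \<sigma> j * \<sigma> i) - mg n J b j * mg n J b i"
    unfolding mg_def avg_def using Zf_pos[of n J b] by (simp add: field_simps)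
  finally show ?thesis .
qed

definition fpath :: "(nat \<Rightarrow> real) \<Rightarrow> (nat \<Rightarrow> real) \<Rightarrow> real \<Rightarrow> nat \<Rightarrow> real" where
  "fpath b d t = (\<lambda>k. b k + t * d k)"

lemma wexp_path: "wexp n J (fpath b d t) \<sigma> = wexp n J b \<sigma> + t * (\<Sum>k<n. d k * \<sigma> k)"
  unfolding wexp_def fpath_def by (simp add: algebra_simps sum.distrib sum_distrib_left)

lemma deriv_N:
  "((\<lambda>t. \<Sum>\<sigma>\<in>spins n. f \<sigma> * exp (wexp n J (fpath b d t) \<sigma>)) has_real_derivative
     (\<Sum>\<sigma>\<in>spins n. f \<sigma> * (\<Sum>k<n. d k * \<sigma> k) * exp (wexp n J (fpath b d t) \<sigma>))) (at t)"
  unfolding wexp_path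
  by (rule DERIV_sum) (auto intro!: derivative_eq_intros)

lemma deriv_Z:
  "((\<lambda>t. Zf n J (fpath b d t)) has_real_derivative
     (\<Sum>\<sigma>\<in>spins n. (\<Sum>k<n. d k * \<sigma> k) * exp (wexp n J (fpath b d t) \<sigma>))) (at t)"
  unfolding Zf_def using deriv_N[of "\<lambda>_. 1" n J b d t] by simp

lemma avg_lin: "avg n J b (\<lambda>\<sigma>. \<Sum>k<n. d k * \<sigma> k) = (\<Sum>k<n. d k * mg n J b k)"
proof -
  have "(\<Sum>\<sigma>\<in>spins n. (\<Sum>k<n. d k * \<sigma> k) * exp (wexp n J b \<sigma>)) = (\<Sum>\<sigma>\<in>spins n. \<Sum>k<n. d k * (\<sigma> k * exp (wexp n J b \<sigma>)))"
    by (simp add: sum_distrib_right mult.assoc)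
  also have "\<dots> = (\<Sum>k<n. \<Sum>\<sigma>\<in>spins n. d k * (\<sigma> k * exp (wexp n J b \<sigma>)))" by (rule sum.swap)
  also have "\<dots> = (\<Sum>k<n. d k * (\<Sum>\<sigma>\<in>spins n. \<sigma> k * exp (wexp n J b \<sigma>)))" by (simp add: sum_distrib_left)
  finally show ?thesis unfolding avg_def mg_def by (simp add: sum_divide_distrib[symmetric])
qed

lemma alg_q: fixes Z a N c :: real assumes "Z \<noteq> 0"
  shows "(a * Z - N * c) / (Z * Z) = a / Z - (N / Z) * (c / Z)"
  using assms by (simp add: field_simps)

lemma deriv_avg:
  "((\<lambda>t. avg n J (fpath b d t) f) has_real_derivative
     (avg n J (fpath b d t) (\<lambda>\<sigma>. f \<sigma> * (\<Sum>k<n. d k * \<sigma> k)) - avg n J (fpath b d t) f * avg n J (fpath b d t) (\<lambda>\<sigma>. \<Sum>k<n. d k * \<sigma> k))) (at t)"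
proof -
  have Z: "Zf n J (fpath b d t) \<noteq> 0" using Zf_pos[of n J] by (metis less_irrefl)
  show ?thesis
    unfolding avg_def
    apply (rule DERIV_cong)
     apply (rule DERIV_divide[OF deriv_N deriv_Z Z])
    using alg_q[OF Z] by simp
qed

lemma deriv_logZ:
  "((\<lambda>t. ln (Zf n J (fpath b d t))) has_real_derivative (\<Sum>k<n. d k * mg n J (fpath b d t) k)) (at t)"
proof -
  have "((\<lambda>t. ln (Zf n J (fpath b d t))) has_real_derivative
      (\<Sum>\<sigma>\<in>spins n. (\<Sum>k<n. d k * \<sigma> k) * exp (wexp n J (fpath b d t) \<sigma>)) / Zf n J (fpath b d t)) (at t)"
    using Zf_pos[of n J] by (auto intro!: derivative_eq_intros deriv_Z)
  then show ?thesis using avg_lin[of n J "fpath b d t" d] unfolding avg_def by simp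
qed

definition ei :: "nat \<Rightarrow> nat \<Rightarrow> real" where "ei i = (\<lambda>k. if k = i then 1 else 0)"

lemma sum_ei: assumes "i < n" shows "(\<Sum>k<n. ei i k * x k) = x i"
proof -
  have "(\<Sum>k<n. ei i k * x k) = (\<Sum>k<n. if k = i then x k else 0)"
    by (rule sum.cong) (auto simp: ei_def)
  also have "\<dots> = x i" using assms by (simp add: sum.delta)
  finally show ?thesis .
qed

lemma fpath0: "fpath b d 0 = b"
  unfolding fpath_def by simp

lemma path_nonneg: "(\<And>k. k < n \<Longrightarrow> 0 \<le> b k) \<Longrightarrow> 0 \<le> t \<Longrightarrow> k < n \<Longrightarrow> 0 \<le> fpath b (ei i) t k"
  unfolding fpath_def ei_def by auto

lemma mg_mono:
  assumes J: "\<And>X. X \<subseteq> {0..<n} \<Longrightarrow> 0 \<le> J X" and b: "\<And>k. k < n \<Longrightarrow> 0 \<le> b k"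
    and ij: "i < n" "j < n" and s: "0 \<le> s"
  shows "mg n J b j \<le> mg n J (fpath b (ei i) s) j"
proof -
  have "mg n J (fpath b (ei i) 0) j \<le> mg n J (fpath b (ei i) s) j"
  proof (rule DERIV_nonneg_imp_nondecreasing[OF s])
    fix t :: real assume t: "0 \<le> t" "t \<le> s"
    let ?b = "fpath b (ei i) t"
    have D: "((\<lambda>t. mg n J (fpath b (ei i) t) j) has_real_derivative
       (avg n J ?b (\<lambda>\<sigma>. \<sigma> j * (\<Sum>k<n. ei i k * \<sigma> k)) - mg n J ?b j * avg n J ?b (\<lambda>\<sigma>. \<Sum>k<n. ei i k * \<sigma> k))) (at t)"
      unfolding mg_def by (rule deriv_avg)
    have e1: "avg n J ?b (\<lambda>\<sigma>. \<sigma> j * (\<Sum>k<n. ei i k * \<sigma> k)) = avg n J ?b (\<lambda>\<sigma>. \<sigma> j * \<sigma> i)"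
      using sum_ei[OF ij(1)] by simp
    have e2: "avg n J ?b (\<lambda>\<sigma>. \<Sum>k<n. ei i k * \<sigma> k) = mg n J ?b i"
      unfolding sum_ei[OF ij(1)] mg_def by (rule refl)
    have "0 \<le> avg n J ?b (\<lambda>\<sigma>. \<sigma> j * \<sigma> i) - mg n J ?b j * mg n J ?b i"
      using ij by (intro cov_nonneg J) (auto intro: path_nonneg b t)
    then show "\<exists>y. ((\<lambda>t. mg n J (fpath b (ei i) t) j) has_real_derivative y) (at t) \<and> 0 \<le> y"
      using D unfolding e1 e2 by blast
  qed
  then show ?thesis by (simp add: fpath0)
qed

lemma lip:
  fixes f f' :: "real \<Rightarrow> real"
  assumes D: "\<And>t. (f has_real_derivative f' t) (at t)" and B: "\<And>t. \<bar>f' t\<bar> \<le> B"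
  shows "\<bar>f y - f x\<bar> \<le> B * \<bar>y - x\<bar>"
proof -
  have *: "\<bar>f v - f u\<bar> \<le> B * \<bar>v - u\<bar>" if uv: "u < v" for u v
  proof -
    obtain z where "u < z" "z < v" "f v - f u = (v - u) * f' z"
      using MVT2[of u v f f'] uv D by blast
    then have "\<bar>f v - f u\<bar> = \<bar>v - u\<bar> * \<bar>f' z\<bar>" by (simp add: abs_mult)
    also have "\<dots> \<le> \<bar>v - u\<bar> * B" by (intro mult_left_mono B) auto
    finally show ?thesis by (simp add: mult.commute)
  qed
  show ?thesis
  proof (cases x y rule: linorder_cases)
    case less then show ?thesis using *[OF less] by simp
  next
    case equal then show ?thesis by simp
  next
    case greater then show ?thesis using *[OF greater] by (simp add: abs_minus_commute)
  qed
qed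

lemma deriv_logZ_ei:
  assumes "i < n"
  shows "((\<lambda>t. ln (Zf n J (fpath b (ei i) t))) has_real_derivative mg n J (fpath b (ei i) t) i) (at t)"
  using deriv_logZ[of n J b "ei i" t] unfolding sum_ei[OF assms] .

lemma logZ_lip:
  assumes "i < n"
  shows "\<bar>ln (Zf n J (fpath b (ei i) s)) - ln (Zf n J b)\<bar> \<le> \<bar>s\<bar>"
proof -
  have "\<bar>ln (Zf n J (fpath b (ei i) s)) - ln (Zf n J (fpath b (ei i) 0))\<bar> \<le> 1 * \<bar>s - 0\<bar>"
    by (rule lip[OF deriv_logZ_ei[OF assms] mg_abs[OF assms]])
  then show ?thesis unfolding fpath0 by simp
qed

lemma logZ_mono:
  assumes J: "\<And>X. X \<subseteq> {0..<n} \<Longrightarrow> 0 \<le> J X" and b: "\<And>k. k < n \<Longrightarrow> 0 \<le> b k"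
    and i: "i < n" and s: "0 \<le> s"
  shows "ln (Zf n J b) \<le> ln (Zf n J (fpath b (ei i) s))"
proof -
  have "ln (Zf n J (fpath b (ei i) 0)) \<le> ln (Zf n J (fpath b (ei i) s))"
  proof (rule DERIV_nonneg_imp_nondecreasing[OF s])
    fix t :: real assume t: "0 \<le> t" "t \<le> s"
    show "\<exists>y. ((\<lambda>t. ln (Zf n J (fpath b (ei i) t))) has_real_derivative y) (at t) \<and> 0 \<le> y"
    proof (intro exI conjI)
      show "((\<lambda>t. ln (Zf n J (fpath b (ei i) t))) has_real_derivative mg n J (fpath b (ei i) t) i) (at t)"
        by (rule deriv_logZ_ei[OF i])
      show "0 \<le> mg n J (fpath b (ei i) t) i"
        by (rule mg_nonneg[OF J path_nonneg[OF b t(1)] i])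
    qed
  qed
  then show ?thesis by (simp add: fpath0)
qed

lemma pow_diff_le:
  fixes x y :: real
  assumes "0 \<le> y" "y \<le> x" "x \<le> 1"
  shows "x ^ m - y ^ m \<le> real m * (x - y)"
proof (induction m)
  case 0 then show ?case by simp
next
  case (Suc m)
  have a: "x * (x ^ m - y ^ m) \<le> 1 * (real m * (x - y))"
    using Suc.IH assms power_mono[of y x m] by (intro mult_mono) auto
  have b: "(x - y) * y ^ m \<le> (x - y) * 1"
    using assms by (intro mult_left_mono power_le_one) auto
  have "x ^ Suc m - y ^ Suc m = x * (x ^ m - y ^ m) + (x - y) * y ^ m" by (simp add: algebra_simps)
  then show ?case using a b by (simp add: algebra_simps)
qed

abbreviation EE :: "'a pmf \<Rightarrow> ('a \<Rightarrow> real) \<Rightarrow> real" where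
  "EE p f \<equiv> measure_pmf.expectation p f"

definition varp :: "'a pmf \<Rightarrow> ('a \<Rightarrow> real) \<Rightarrow> real" where
  "varp p f = EE p (\<lambda>x. (f x - EE p f)\<^sup>2)"

lemma int_bdd: "(\<And>x. \<bar>f x\<bar> \<le> B) \<Longrightarrow> integrable (measure_pmf p) (f :: 'a \<Rightarrow> real)"
  by (intro measure_pmf.integrable_const_bound[where B=B]) auto

lemma EE_bdd: "(\<And>x. \<bar>f x\<bar> \<le> B) \<Longrightarrow> \<bar>EE p f\<bar> \<le> B"
proof -
  assume a: "\<And>x. \<bar>f x\<bar> \<le> B"
  have B: "0 \<le> B" using a[of undefined] by (meson abs_ge_zero order_trans)
  have "\<bar>EE p f\<bar> \<le> EE p (\<lambda>x. \<bar>f x\<bar>)" by (rule integral_abs_bound)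
  also have "\<dots> \<le> EE p (\<lambda>x. B)"
    using a B by (intro integral_mono int_bdd[of _ B]) auto
  finally show ?thesis using a[of undefined] by (simp add: order_trans[OF abs_ge_zero])
qed

lemma EE_mono: "(\<And>x. \<bar>f x\<bar> \<le> B) \<Longrightarrow> (\<And>x. \<bar>g x\<bar> \<le> B) \<Longrightarrow> (\<And>x. f x \<le> g x) \<Longrightarrow> EE p f \<le> EE p g"
  by (intro integral_mono int_bdd) auto

lemma EE_diff: "(\<And>x. \<bar>f x\<bar> \<le> B) \<Longrightarrow> (\<And>x. \<bar>g x\<bar> \<le> B) \<Longrightarrow> EE p (\<lambda>x. f x - g x) = EE p f - EE p g"
  by (intro Bochner_Integration.integral_diff int_bdd) auto

lemma var_alt: assumes "\<And>x. \<bar>f x\<bar> \<le> B" shows "varp p f = EE p (\<lambda>x. (f x)\<^sup>2) - (EE p f)\<^sup>2"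
proof -
  have B: "0 \<le> B" using assms[of undefined] by simp
  have i1: "integrable p f" using assms by (rule int_bdd)
  have i2: "integrable p (\<lambda>x. (f x)\<^sup>2)"
  proof (rule int_bdd[of _ "B * B"])
    fix x have "\<bar>(f x)\<^sup>2\<bar> = \<bar>f x\<bar> * \<bar>f x\<bar>" by (simp add: power2_eq_square abs_mult)
    also have "\<dots> \<le> B * B" using assms[of x] by (intro mult_mono) auto
    finally show "\<bar>(f x)\<^sup>2\<bar> \<le> B * B" .
  qed
  have e: "\<And>x. (f x - EE p f)\<^sup>2 = (f x)\<^sup>2 - 2 * EE p f * f x + (EE p f)\<^sup>2"
    by (simp add: power2_eq_square algebra_simps)
  have "varp p f = EE p (\<lambda>x. (f x)\<^sup>2 - 2 * EE p f * f x + (EE p f)\<^sup>2)"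
    unfolding varp_def e ..
  also have "\<dots> = EE p (\<lambda>x. (f x)\<^sup>2) - 2 * EE p f * EE p f + (EE p f)\<^sup>2"
    using i1 i2 by (simp add: prob_space_measure_pmf prob_space.prob_space)
  finally show ?thesis by (simp add: power2_eq_square)
qed

lemma exp_bind_pmf:
  fixes f :: "'b \<Rightarrow> real"
  assumes "\<And>x. \<bar>f x\<bar> \<le> B"
  shows "EE (bind_pmf M N) f = EE M (\<lambda>x. EE (N x) f)"
  unfolding measure_pmf_bind
  using measurable_measure_pmf[of N] assms
  by (intro integral_bind[where K="count_space UNIV" and B=B and B'=1]) (auto intro: measure_pmf.finite_measure simp: measure_pmf.emeasure_space_1)

lemma exp_pair_pmf:
  fixes f :: "'a \<times> 'b \<Rightarrow> real"
  assumes "\<And>x. \<bar>f x\<bar> \<le> B"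
  shows "EE (pair_pmf M N) f = EE M (\<lambda>x. EE N (\<lambda>y. f (x,y)))"
  unfolding pair_pmf_def
  apply (subst exp_bind_pmf[OF assms])
  apply (subst exp_bind_pmf[OF assms])
  apply simp
  done

lemma exp_pair_pmf_swap:
  fixes f :: "'a \<times> 'b \<Rightarrow> real"
  assumes "\<And>x. \<bar>f x\<bar> \<le> B"
  shows "EE (pair_pmf M N) f = EE N (\<lambda>y. EE M (\<lambda>x. f (x,y)))"
proof -
  have "EE (pair_pmf M N) f = EE (pair_pmf N M) (\<lambda>p. f (snd p, fst p))"
    by (subst pair_commute_pmf) (simp add: case_prod_beta)
  also have "\<dots> = EE N (\<lambda>y. EE M (\<lambda>x. f (x,y)))"
    using exp_pair_pmf[of "\<lambda>p. f (snd p, fst p)" B N M] assms by simp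
  finally show ?thesis .
qed

lemma EE_Pi_insert:
  fixes \<Phi> :: "('a \<Rightarrow> nat) \<Rightarrow> real"
  assumes "finite A" "x \<notin> A" "\<And>\<tau>. \<bar>\<Phi> \<tau>\<bar> \<le> B"
  shows "EE (Pi_pmf (insert x A) 0 (\<lambda>_. q)) \<Phi> = EE (Pi_pmf A 0 (\<lambda>_. q)) (\<lambda>f. EE q (\<lambda>y. \<Phi> (f(x := y))))"
proof -
  have "EE (Pi_pmf (insert x A) 0 (\<lambda>_. q)) \<Phi> = EE (pair_pmf q (Pi_pmf A 0 (\<lambda>_. q))) (\<lambda>p. \<Phi> ((snd p)(x := fst p)))"
    by (simp add: Pi_pmf_insert[OF assms(1,2)] case_prod_beta)
  also have "\<dots> = EE (Pi_pmf A 0 (\<lambda>_. q)) (\<lambda>f. EE q (\<lambda>y. \<Phi> (f(x := y))))"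
    using exp_pair_pmf_swap[of "\<lambda>p. \<Phi> ((snd p)(x := fst p))" B q "Pi_pmf A 0 (\<lambda>_. q)"] assms(3) by simp
  finally show ?thesis .
qed

lemma var_bdd: assumes "\<And>x. 0 \<le> f x \<and> f x \<le> 1" shows "0 \<le> varp p f \<and> varp p f \<le> 1"
proof -
  have E: "0 \<le> EE p f \<and> EE p f \<le> 1"
  proof
    show "0 \<le> EE p f" using assms by (intro Bochner_Integration.integral_nonneg) auto
    show "EE p f \<le> 1" using EE_bdd[of f 1 p] assms by (simp add: abs_le_iff)
  qed
  have "\<bar>(f x - EE p f)\<^sup>2\<bar> \<le> 1" for x
  proof -
    have "\<bar>f x - EE p f\<bar> \<le> 1" using assms[of x] E by auto
    then have "\<bar>f x - EE p f\<bar> * \<bar>f x - EE p f\<bar> \<le> 1 * 1" by (intro mult_mono) auto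
    then show ?thesis by (simp add: power2_eq_square abs_mult)
  qed
  then have "\<bar>varp p f\<bar> \<le> 1" unfolding varp_def by (rule EE_bdd)
  moreover have "0 \<le> varp p f" unfolding varp_def by (intro Bochner_Integration.integral_nonneg) auto
  ultimately show ?thesis by auto
qed

lemma EE_01: assumes "\<And>x. 0 \<le> f x \<and> f x \<le> 1" shows "0 \<le> EE p f \<and> EE p f \<le> 1"
proof
  show "0 \<le> EE p f" using assms by (intro Bochner_Integration.integral_nonneg) auto
  show "EE p f \<le> 1" using EE_bdd[of f 1 p] assms by (simp add: abs_le_iff)
qed

lemma ES:
  fixes q :: "nat pmf" and lam :: real
  assumes H1: "\<And>g. (\<And>m. 0 \<le> g m \<and> g m \<le> 1) \<Longrightarrow> (\<And>m. g m \<le> g (Suc m)) \<Longrightarrow> varp q g \<le> lam * EE q (\<lambda>m. g (Suc m) - g m)"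
    and lam: "0 \<le> lam"
    and A: "finite A"
  shows "(\<And>\<tau>. 0 \<le> F \<tau> \<and> F \<tau> \<le> 1) \<Longrightarrow> (\<And>i \<tau>. i \<in> A \<Longrightarrow> F \<tau> \<le> F (\<tau>(i := Suc (\<tau> i)))) \<Longrightarrow>
    varp (Pi_pmf A 0 (\<lambda>_. q)) F \<le> lam * (\<Sum>i\<in>A. EE (Pi_pmf A 0 (\<lambda>_. q)) (\<lambda>\<tau>. F (\<tau>(i := Suc (\<tau> i))) - F \<tau>))"
  using A
proof (induction A arbitrary: F rule: finite_induct)
  case empty
  then show ?case by (simp add: varp_def)
next
  case (insert x A)
  note F01 = insert.prems(1) and Fmono = insert.prems(2)
  let ?P = "Pi_pmf A 0 (\<lambda>_. q)"
  let ?P' = "Pi_pmf (insert x A) 0 (\<lambda>_. q)"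
  define G where "G f y = F (f(x := y))" for f y
  define H where "H f = EE q (G f)" for f
  have Fb: "\<bar>F \<tau>\<bar> \<le> 1" for \<tau> using F01[of \<tau>] by auto
  have F2b: "\<bar>(F \<tau>)\<^sup>2\<bar> \<le> 1" for \<tau>
    using F01[of \<tau>] by (simp add: power_le_one)
  have G01: "0 \<le> G f y \<and> G f y \<le> 1" for f y unfolding G_def by (rule F01)
  have H01: "0 \<le> H f \<and> H f \<le> 1" for f unfolding H_def by (rule EE_01) (rule G01)
  have Hb: "\<bar>H f\<bar> \<le> 1" for f using H01[of f] by auto
  have H2b: "\<bar>(H f)\<^sup>2\<bar> \<le> 1" for f using H01[of f] by (simp add: power_le_one)
  have G2b: "\<bar>(G f y)\<^sup>2\<bar> \<le> 1" for f y using G01[of f y] by (simp add: power_le_one)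
  have EG2b: "\<bar>EE q (\<lambda>y. (G f y)\<^sup>2)\<bar> \<le> 1" for f by (rule EE_bdd) (rule G2b)
  have diffb: "\<bar>a - b\<bar> \<le> 1" if "0 \<le> a \<and> a \<le> 1" "0 \<le> b \<and> b \<le> 1" for a b :: real
    using that by auto
  have v: "varp ?P' F = EE ?P (\<lambda>f. varp q (G f)) + varp ?P H"
  proof -
    have a: "varp ?P' F = EE ?P' (\<lambda>\<tau>. (F \<tau>)\<^sup>2) - (EE ?P' F)\<^sup>2" by (rule var_alt[OF Fb])
    have b: "EE ?P' (\<lambda>\<tau>. (F \<tau>)\<^sup>2) = EE ?P (\<lambda>f. EE q (\<lambda>y. (G f y)\<^sup>2))"
      unfolding G_def by (rule EE_Pi_insert[OF insert.hyps(1,2)]) (rule F2b)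
    have c: "EE ?P' F = EE ?P H"
      unfolding H_def G_def by (rule EE_Pi_insert[OF insert.hyps(1,2)]) (rule Fb)
    have d: "EE ?P (\<lambda>f. varp q (G f)) = EE ?P (\<lambda>f. EE q (\<lambda>y. (G f y)\<^sup>2) - (H f)\<^sup>2)"
      unfolding H_def using var_alt[of "G _" 1 q] G01 by (simp add: abs_le_iff) 
    have e: "EE ?P (\<lambda>f. EE q (\<lambda>y. (G f y)\<^sup>2) - (H f)\<^sup>2) = EE ?P (\<lambda>f. EE q (\<lambda>y. (G f y)\<^sup>2)) - EE ?P (\<lambda>f. (H f)\<^sup>2)"
      by (rule EE_diff[OF EG2b H2b])
    have f: "varp ?P H = EE ?P (\<lambda>f. (H f)\<^sup>2) - (EE ?P H)\<^sup>2" by (rule var_alt[OF Hb])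
    show ?thesis using a b d e f unfolding c by linarith
  qed
  have t1: "EE ?P (\<lambda>f. varp q (G f)) \<le> lam * EE ?P' (\<lambda>\<tau>. F (\<tau>(x := Suc (\<tau> x))) - F \<tau>)"
  proof -
    have "EE ?P (\<lambda>f. varp q (G f)) \<le> EE ?P (\<lambda>f. lam * EE q (\<lambda>m. G f (Suc m) - G f m))"
    proof (rule EE_mono[where B="1 + lam"])
      fix f
      show "\<bar>varp q (G f)\<bar> \<le> 1 + lam" using var_bdd[of "G f" q] G01 lam by auto
      have "\<bar>EE q (\<lambda>m. G f (Suc m) - G f m)\<bar> \<le> 1"
        by (rule EE_bdd) (rule diffb[OF G01 G01])
      then show "\<bar>lam * EE q (\<lambda>m. G f (Suc m) - G f m)\<bar> \<le> 1 + lam"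
        using lam by (simp add: abs_mult) (smt (verit) mult_left_le)
      show "varp q (G f) \<le> lam * EE q (\<lambda>m. G f (Suc m) - G f m)"
      proof (rule H1)
        show "\<And>m. 0 \<le> G f m \<and> G f m \<le> 1" by (rule G01)
        fix m show "G f m \<le> G f (Suc m)"
        proof -
          have e: "(f(x := m))(x := Suc ((f(x := m)) x)) = f(x := Suc m)" by simp
          have "F (f(x := m)) \<le> F ((f(x := m))(x := Suc ((f(x := m)) x)))" by (rule Fmono) simp
          then show ?thesis unfolding G_def e .
        qed
      qed
    qed
    also have "\<dots> = lam * EE ?P (\<lambda>f. EE q (\<lambda>m. G f (Suc m) - G f m))" by simp
    also have "EE ?P (\<lambda>f. EE q (\<lambda>m. G f (Suc m) - G f m)) = EE ?P' (\<lambda>\<tau>. F (\<tau>(x := Suc (\<tau> x))) - F \<tau>)"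
      using EE_Pi_insert[OF insert.hyps(1,2), of "\<lambda>\<tau>. F (\<tau>(x := Suc (\<tau> x))) - F \<tau>" 1 q] diffb[OF F01 F01]
      unfolding G_def by simp
    finally show ?thesis .
  qed
  have t2: "varp ?P H \<le> lam * (\<Sum>i\<in>A. EE ?P' (\<lambda>\<tau>. F (\<tau>(i := Suc (\<tau> i))) - F \<tau>))"
  proof -
    have "varp ?P H \<le> lam * (\<Sum>i\<in>A. EE ?P (\<lambda>f. H (f(i := Suc (f i))) - H f))"
    proof (rule insert.IH)
      show "\<And>\<tau>. 0 \<le> H \<tau> \<and> H \<tau> \<le> 1" by (rule H01)
      fix i f assume i: "i \<in> A"
      then have ix: "i \<noteq> x" using insert.hyps(2) by auto
      show "H f \<le> H (f(i := Suc (f i)))"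
        unfolding H_def
      proof (rule EE_mono[where B=1])
        fix y
        show "\<bar>G f y\<bar> \<le> 1" "\<bar>G (f(i := Suc (f i))) y\<bar> \<le> 1" using G01 by (auto simp: abs_le_iff)
        show "G f y \<le> G (f(i := Suc (f i))) y"
        proof -
          have "F (f(x := y)) \<le> F ((f(x := y))(i := Suc ((f(x := y)) i)))" by (rule Fmono) (use i in simp)
          moreover have "(f(x := y))(i := Suc ((f(x := y)) i)) = (f(i := Suc (f i)))(x := y)"
            using ix by (auto simp: fun_eq_iff)
          ultimately show ?thesis unfolding G_def by simp
        qed
      qed
    qed
    also have "(\<Sum>i\<in>A. EE ?P (\<lambda>f. H (f(i := Suc (f i))) - H f)) = (\<Sum>i\<in>A. EE ?P' (\<lambda>\<tau>. F (\<tau>(i := Suc (\<tau> i))) - F \<tau>))"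
    proof (rule sum.cong[OF refl])
      fix i assume i: "i \<in> A"
      then have ix: "i \<noteq> x" using insert.hyps(2) by auto
      have "EE ?P' (\<lambda>\<tau>. F (\<tau>(i := Suc (\<tau> i))) - F \<tau>) = EE ?P (\<lambda>f. EE q (\<lambda>y. F ((f(x := y))(i := Suc ((f(x := y)) i))) - F (f(x := y))))"
        by (rule EE_Pi_insert[OF insert.hyps(1,2)]) (rule diffb[OF F01 F01])
      also have "\<dots> = EE ?P (\<lambda>f. H (f(i := Suc (f i))) - H f)"
      proof (rule Bochner_Integration.integral_cong[OF refl])
        fix f
        have "EE q (\<lambda>y. F ((f(x := y))(i := Suc ((f(x := y)) i))) - F (f(x := y))) = EE q (\<lambda>y. G (f(i := Suc (f i))) y - G f y)"
          unfolding G_def using ix by (simp add: fun_upd_twist)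
        also have "\<dots> = H (f(i := Suc (f i))) - H f"
          unfolding H_def by (rule EE_diff[where B=1]) (use G01 in \<open>auto simp: abs_le_iff\<close>)
        finally show "EE q (\<lambda>y. F ((f(x := y))(i := Suc ((f(x := y)) i))) - F (f(x := y))) = H (f(i := Suc (f i))) - H f" .
      qed
      finally show "EE ?P (\<lambda>f. H (f(i := Suc (f i))) - H f) = EE ?P' (\<lambda>\<tau>. F (\<tau>(i := Suc (\<tau> i))) - F \<tau>)" by simp
    qed
    finally show ?thesis .
  qed
  show ?case unfolding v sum.insert[OF insert.hyps] distrib_left using t1 t2 by linarith
qed

lemma pmf_int_nat:
  fixes p :: "nat pmf" and f :: "nat \<Rightarrow> real"
  assumes "summable (\<lambda>n. \<bar>pmf p n * f n\<bar>)"
  shows "integrable (measure_pmf p) f" "EE p f = (\<Sum>n. pmf p n * f n)"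
proof -
  have i: "integrable (count_space UNIV) (\<lambda>n. pmf p n * f n)"
    using assms by (simp add: integrable_count_space_nat_iff)
  then show "integrable (measure_pmf p) f"
    by (simp add: measure_pmf_eq_density integrable_density)
  have "EE p f = integral\<^sup>L (count_space UNIV) (\<lambda>n. pmf p n * f n)"
    by (simp add: measure_pmf_eq_density integral_density)
  also have "\<dots> = (\<Sum>n. pmf p n * f n)" using i by (rule integral_count_space_nat)
  finally show "EE p f = (\<Sum>n. pmf p n * f n)" .
qed

lemma summable_pmf_nat: "summable (\<lambda>n. pmf (p :: nat pmf) n)"
  using integrable_pmf[of UNIV p] by (simp add: integrable_count_space_nat_iff)

lemma summable_bdd:
  fixes p :: "nat pmf"
  assumes "\<And>n. \<bar>f n\<bar> \<le> B"
  shows "summable (\<lambda>n. \<bar>pmf p n * f n\<bar>)"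
proof (rule summable_comparison_test)
  have "pmf p n * \<bar>f n\<bar> \<le> pmf p n * B" for n by (rule mult_left_mono[OF assms pmf_nonneg])
  then show "\<exists>N. \<forall>n\<ge>N. norm \<bar>pmf p n * f n\<bar> \<le> B * pmf p n"
    by (auto simp: abs_mult mult.commute[of B])
  show "summable (\<lambda>n. B * pmf p n)" by (intro summable_mult summable_pmf_nat)
qed

context
  fixes lam :: real assumes lam: "0 < lam"
begin

lemma pois_Suc: "pmf (poisson_pmf lam) (Suc m) * real (Suc m) = lam * pmf (poisson_pmf lam) m"
proof -
  have ne: "real (Suc m) \<noteq> 0" "fact m \<noteq> (0::real)" by auto
  have "pmf (poisson_pmf lam) (Suc m) * real (Suc m) = lam ^ Suc m / (real (Suc m) * fact m) * exp (- lam) * real (Suc m)"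
    using lam by (simp add: fact_Suc)
  also have "\<dots> = lam * (lam ^ m / fact m * exp (- lam))"
  proof -
    have aux: "c \<noteq> 0 \<Longrightarrow> lam ^ Suc m / (c * fact m) * exp (- lam) * c = lam * (lam ^ m / fact m * exp (- lam))" for c :: real
      by (simp add: field_simps)
    show ?thesis by (rule aux[OF ne(1)])
  qed
  finally show ?thesis using lam by simp
qed

lemma stein:
  fixes \<phi> :: "nat \<Rightarrow> real"
  assumes B: "\<And>n. \<bar>\<phi> n\<bar> \<le> B"
  shows "integrable (measure_pmf (poisson_pmf lam)) (\<lambda>n. real n * \<phi> n)"
    "EE (poisson_pmf lam) (\<lambda>n. real n * \<phi> n) = lam * EE (poisson_pmf lam) (\<lambda>n. \<phi> (Suc n))"
proof -
  let ?p = "poisson_pmf lam"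
  let ?a = "\<lambda>n. pmf ?p n * (real n * \<phi> n)"
  have sh: "?a (Suc m) = lam * (pmf ?p m * \<phi> (Suc m))" for m
  proof -
    have "?a (Suc m) = (pmf ?p (Suc m) * real (Suc m)) * \<phi> (Suc m)" by (simp only: mult.assoc)
    then show ?thesis unfolding pois_Suc by simp
  qed
  have s1: "summable (\<lambda>m. \<bar>pmf ?p m * \<phi> (Suc m)\<bar>)" by (rule summable_bdd) (rule B)
  have "summable (\<lambda>m. \<bar>?a (Suc m)\<bar>)"
    unfolding sh using summable_mult[OF s1, of "\<bar>lam\<bar>"] by (simp add: abs_mult)
  then have s: "summable (\<lambda>n. \<bar>?a n\<bar>)" by (subst summable_Suc_iff[symmetric])
  show "integrable (measure_pmf ?p) (\<lambda>n. real n * \<phi> n)" using pmf_int_nat(1)[OF s] .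
  have "EE ?p (\<lambda>n. real n * \<phi> n) = (\<Sum>n. ?a n)" using pmf_int_nat(2)[OF s] .
  also have "\<dots> = (\<Sum>n. ?a (Suc n))"
    using suminf_split_head[OF summable_rabs_cancel[OF s]] by simp
  also have "\<dots> = lam * (\<Sum>m. pmf ?p m * \<phi> (Suc m))"
    unfolding sh by (rule suminf_mult) (rule summable_rabs_cancel[OF s1])
  also have "(\<Sum>m. pmf ?p m * \<phi> (Suc m)) = EE ?p (\<lambda>n. \<phi> (Suc n))"
    using pmf_int_nat(2)[OF s1] by simp
  finally show "EE ?p (\<lambda>n. real n * \<phi> n) = lam * EE ?p (\<lambda>n. \<phi> (Suc n))" .
qed

lemma pois_var:
  fixes g :: "nat \<Rightarrow> real"
  assumes g01: "\<And>m. 0 \<le> g m \<and> g m \<le> 1" and gm: "\<And>m. g m \<le> g (Suc m)"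
  shows "varp (poisson_pmf lam) g \<le> lam * EE (poisson_pmf lam) (\<lambda>m. g (Suc m) - g m)"
proof -
  let ?p = "poisson_pmf lam"
  have gmono: "m \<le> n \<Longrightarrow> g m \<le> g n" for m n using lift_Suc_mono_le[of g, OF gm] by blast
  define v where "v n = real n - g n" for n
  have vs: "v n \<le> v (Suc n)" for n using g01[of n] g01[of "Suc n"] by (simp add: v_def)
  have vmono: "m \<le> n \<Longrightarrow> v m \<le> v n" for m n using lift_Suc_mono_le[of v, OF vs] by blast
  have gb: "\<bar>g n\<bar> \<le> 1" for n using g01[of n] by auto
  have g2b: "\<bar>(g n)\<^sup>2\<bar> \<le> 1" for n using g01[of n] by (simp add: power_le_one)
  have ig: "integrable ?p g" by (rule int_bdd[OF gb])
  have ig2: "integrable ?p (\<lambda>n. (g n)\<^sup>2)" by (rule int_bdd[OF g2b])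
  have igs: "integrable ?p (\<lambda>n. g (Suc n))" by (rule int_bdd[OF gb])
  have iN: "integrable ?p (\<lambda>n. real n)" using stein(1)[of "\<lambda>_. 1" 1] by simp
  have EN: "EE ?p (\<lambda>n. real n) = lam" using stein(2)[of "\<lambda>_. 1" 1] by simp
  have ing: "integrable ?p (\<lambda>n. real n * g n)" by (rule stein(1)[OF gb])
  have ENg: "EE ?p (\<lambda>n. real n * g n) = lam * EE ?p (\<lambda>n. g (Suc n))" by (rule stein(2)[OF gb])
  define W where "W = EE ?p v"
  have W: "W = lam - EE ?p g"
    unfolding W_def v_def using iN ig EN by simp
  have ex: "\<exists>n. W \<le> v n"
  proof
    let ?n = "nat \<lceil>W\<rceil> + 1"
    have "W \<le> real (nat \<lceil>W\<rceil>)" by linarith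
    then show "W \<le> v ?n" using g01[of ?n] unfolding v_def by simp
  qed
  define t where "t = (LEAST n. W \<le> v n)"
  have t: "W \<le> v t" unfolding t_def using LeastI_ex[OF ex] .
  have tl: "n < t \<Longrightarrow> v n < W" for n unfolding t_def using not_less_Least[of n "\<lambda>n. W \<le> v n"] by simp
  have pw: "0 \<le> (v n - W) * (g n - g t)" for n
  proof (cases "n < t")
    case True
    then show ?thesis using tl[OF True] gmono[of n t] by (intro mult_nonpos_nonpos) auto
  next
    case False
    then show ?thesis using vmono[of t n] t gmono[of t n] by (intro mult_nonneg_nonneg) auto
  qed
  let ?c = "g t"
  have "0 \<le> EE ?p (\<lambda>n. (v n - W) * (g n - ?c))"
    using pw by (intro Bochner_Integration.integral_nonneg) auto
  also have "EE ?p (\<lambda>n. (v n - W) * (g n - ?c)) =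
     EE ?p (\<lambda>n. real n * g n - (g n)\<^sup>2 - W * g n - ?c * real n + ?c * g n + ?c * W)"
    by (rule Bochner_Integration.integral_cong) (simp_all add: v_def algebra_simps power2_eq_square)
  also have "\<dots> = EE ?p (\<lambda>n. real n * g n) - EE ?p (\<lambda>n. (g n)\<^sup>2) - W * EE ?p g - ?c * EE ?p (\<lambda>n. real n) + ?c * EE ?p g + ?c * W"
    using ing ig2 ig iN by simp
  finally have main: "0 \<le> lam * EE ?p (\<lambda>n. g (Suc n)) - EE ?p (\<lambda>n. (g n)\<^sup>2) - (lam - EE ?p g) * EE ?p g"
    unfolding ENg EN W by (simp add: algebra_simps)
  have "varp ?p g = EE ?p (\<lambda>n. (g n)\<^sup>2) - (EE ?p g)\<^sup>2"
  proof -
    have e: "\<And>x. (g x - EE ?p g)\<^sup>2 = (g x)\<^sup>2 - 2 * EE ?p g * g x + (EE ?p g)\<^sup>2"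
      by (simp add: power2_eq_square algebra_simps)
    have "varp ?p g = EE ?p (\<lambda>x. (g x)\<^sup>2 - 2 * EE ?p g * g x + (EE ?p g)\<^sup>2)"
      unfolding varp_def e ..
    also have "\<dots> = EE ?p (\<lambda>x. (g x)\<^sup>2) - 2 * EE ?p g * EE ?p g + (EE ?p g)\<^sup>2"
      using ig ig2 by simp
    finally show ?thesis by (simp add: power2_eq_square)
  qed
  also have "\<dots> \<le> lam * (EE ?p (\<lambda>n. g (Suc n)) - EE ?p g)"
    using main by (simp add: algebra_simps power2_eq_square)
  also have "EE ?p (\<lambda>n. g (Suc n)) - EE ?p g = EE ?p (\<lambda>m. g (Suc m) - g m)"
    using igs ig by simp
  finally show ?thesis .
qed

end


lemma pois_1d:
  fixes g :: "nat \<Rightarrow> real" and lam :: real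
  assumes lam: "0 \<le> lam" and g01: "\<And>m. 0 \<le> g m \<and> g m \<le> 1" and gm: "\<And>m. g m \<le> g (Suc m)"
  shows "varp (pois lam) g \<le> lam * EE (pois lam) (\<lambda>m. g (Suc m) - g m)"
proof (cases "0 < lam")
  case True
  then show ?thesis unfolding pois_def using pois_var[OF True, of g] g01 gm by simp
next
  case False
  then have "lam = 0" using lam by simp
  then show ?thesis unfolding pois_def varp_def by simp
qed

lemma deriv_EE:
  fixes \<Phi> dd :: "real \<Rightarrow> 'a \<Rightarrow> real"
  assumes D: "\<And>x \<tau>. ((\<lambda>s. \<Phi> s \<tau>) has_real_derivative dd x \<tau>) (at x)"
    and Bc: "\<And>x \<tau>. \<bar>dd x \<tau>\<bar> \<le> B" and BP: "\<And>x \<tau>. \<bar>\<Phi> x \<tau>\<bar> \<le> C"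
  shows "((\<lambda>s. EE p (\<Phi> s)) has_real_derivative EE p (dd x)) (at x)"
proof -
  define Q where "Q s \<tau> = (if s = x then dd x \<tau> else (\<Phi> s \<tau> - \<Phi> x \<tau>) / (s - x))" for s \<tau>
  have Qb: "norm (Q s \<tau>) \<le> B" for s \<tau>
  proof (cases "s = x")
    case True then show ?thesis using Bc by (simp add: Q_def)
  next
    case False
    have "\<bar>\<Phi> s \<tau> - \<Phi> x \<tau>\<bar> \<le> B * \<bar>s - x\<bar>"
      by (rule lip[OF D Bc])
    then show ?thesis using False by (simp add: Q_def abs_divide divide_le_eq)
  qed
  have Qc: "continuous_on UNIV (\<lambda>s. Q s \<tau>)" for \<tau>
  proof -
    have "isCont (\<lambda>s. Q s \<tau>) s" for s
    proof (cases "s = x")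
      case True
      have "((\<lambda>y. (\<Phi> y \<tau> - \<Phi> x \<tau>) / (y - x)) \<longlongrightarrow> dd x \<tau>) (at x)"
        using D[where x=x and \<tau>=\<tau>] by (simp add: has_field_derivative_iff)
      then have "((\<lambda>y. Q y \<tau>) \<longlongrightarrow> dd x \<tau>) (at x)"
        by (rule Lim_transform_eventually) (auto simp: Q_def eventually_at_filter)
      then show ?thesis unfolding True isCont_def by (simp add: Q_def)
    next
      case False
      have ev: "eventually (\<lambda>y. Q y \<tau> = (\<Phi> y \<tau> - \<Phi> x \<tau>) / (y - x)) (nhds s)"
      proof -
        have "eventually (\<lambda>y. y \<in> - {x}) (nhds s)"
          using False by (intro eventually_nhds_in_open) auto
        then show ?thesis by (rule eventually_mono) (simp add: Q_def)
      qed
      have c: "isCont (\<lambda>y. \<Phi> y \<tau>) s" using D[where x=s and \<tau>=\<tau>] by (rule DERIV_isCont)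
      have "isCont (\<lambda>y. (\<Phi> y \<tau> - \<Phi> x \<tau>) / (y - x)) s"
        using False by (intro continuous_intros c) auto
      then show ?thesis using isCont_cong[OF ev] by simp
    qed
    then show ?thesis by (simp add: continuous_on_eq_continuous_at)
  qed
  have "continuous_on UNIV (\<lambda>s. EE p (\<lambda>\<tau>. Q s \<tau>))"
    by (rule continuous_on_LINT_pmf[where B=B]) (use Qc Qb in auto)
  then have "isCont (\<lambda>s. EE p (\<lambda>\<tau>. Q s \<tau>)) x" by (simp add: continuous_on_eq_continuous_at)
  moreover have "(\<lambda>\<tau>. Q x \<tau>) = dd x" by (simp add: Q_def fun_eq_iff)
  ultimately have "((\<lambda>s. EE p (\<lambda>\<tau>. Q s \<tau>)) \<longlongrightarrow> EE p (dd x)) (at x)"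
    unfolding isCont_def by metis
  then have "((\<lambda>s. (EE p (\<Phi> s) - EE p (\<Phi> x)) / (s - x)) \<longlongrightarrow> EE p (dd x)) (at x)"
  proof (rule Lim_transform_eventually)
    have "EE p (\<lambda>\<tau>. Q s \<tau>) = (EE p (\<Phi> s) - EE p (\<Phi> x)) / (s - x)" if "s \<noteq> x" for s
    proof -
      have "EE p (\<lambda>\<tau>. Q s \<tau>) = EE p (\<lambda>\<tau>. (\<Phi> s \<tau> - \<Phi> x \<tau>) / (s - x))"
        using that by (simp add: Q_def)
      also have "\<dots> = EE p (\<lambda>\<tau>. \<Phi> s \<tau> - \<Phi> x \<tau>) / (s - x)" by simp
      also have "EE p (\<lambda>\<tau>. \<Phi> s \<tau> - \<Phi> x \<tau>) = EE p (\<Phi> s) - EE p (\<Phi> x)"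
        by (rule EE_diff[where B=C]) (rule BP)+
      finally show ?thesis .
    qed
    then show "\<forall>\<^sub>F s in at x. EE p (\<lambda>\<tau>. Q s \<tau>) = (EE p (\<Phi> s) - EE p (\<Phi> x)) / (s - x)"
      by (auto simp: eventually_at_filter)
  qed
  then show ?thesis by (simp add: has_field_derivative_iff)
qed


lemma Zf_local: "(\<And>k. k < n \<Longrightarrow> b k = b' k) \<Longrightarrow> Zf n J b = Zf n J b'"
  unfolding Zf_def using wexp_local[of n b b' J] by simp

theorem lemma3p3:
  fixes n k :: nat and \<theta> h1 \<alpha> hl hu :: real and J :: "nat set \<Rightarrow> real"
  assumes "n \<ge> 1"
    and "1/2 < \<theta>" "\<theta> \<le> 7/8"
    and "0 \<le> h1" "h1 \<le> 1"
    and "0 \<le> \<alpha>" "\<alpha> \<le> 1"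
    and "k \<ge> 1"
    and "0 < hl" "hl \<le> hu" "hu < 1"
    and "\<And>X. J X \<ge> 0"
  shows "integral {hl..hu} (\<lambda>h0. E_tau n \<alpha> \<theta> (\<lambda>\<tau>.
            (overlap_avg n k J h0 h1 \<tau> - E_tau n \<alpha> \<theta> (\<lambda>\<tau>'. overlap_avg n k J h0 h1 \<tau>'))\<^sup>2))
         \<le> \<alpha> * real k * h1 / real n powr (1 - \<theta>)"
proof -
  note n1 = assms(1) and h1 = assms(4,5) and al = assms(6) and hl = assms(9,10)
  define lam where "lam = \<alpha> * real n powr (\<theta> - 1)"
  have lam0: "0 \<le> lam" unfolding lam_def using al by simp
  define law where "law = tau_law n \<alpha> \<theta>"
  have law_eq: "law = Pi_pmf {0..<n} 0 (\<lambda>_. pois lam)" unfolding law_def tau_law_def lam_def ..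
  have Jn: "\<And>X. X \<subseteq> {0..<n} \<Longrightarrow> 0 \<le> J X" using assms(12) by blast
  define bb where "bb h \<tau> = (\<lambda>kk. h + h1 * real (\<tau> kk))" for h :: real and \<tau> :: "nat \<Rightarrow> nat"
  define F where "F h \<tau> = overlap_avg n k J h h1 \<tau>" for h \<tau>
  have OA: "F h \<tau> = (1 / real n) * (\<Sum>j<n. (mg n J (bb h \<tau>) j) ^ k)" for h \<tau>
    unfolding F_def overlap_avg_def gibbs_eq mg_def bb_def ..
  have bbnn: "0 \<le> bb h \<tau> kk" if "0 \<le> h" for h \<tau> kk
    unfolding bb_def using that h1 by simp
  have bb_up: "bb h (\<tau>(i := Suc (\<tau> i))) kk = fpath (bb h \<tau>) (ei i) h1 kk" for h \<tau> i kk
    unfolding bb_def fpath_def ei_def by (simp add: algebra_simps)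
  have mg_up: "mg n J (bb h (\<tau>(i := Suc (\<tau> i)))) j = mg n J (fpath (bb h \<tau>) (ei i) h1) j" for h \<tau> i j
    by (rule mg_local) (rule bb_up)
  have Zf_up: "Zf n J (bb h (\<tau>(i := Suc (\<tau> i)))) = Zf n J (fpath (bb h \<tau>) (ei i) h1)" for h \<tau> i
    by (rule Zf_local) (rule bb_up)
  have mg01: "0 \<le> mg n J (bb h \<tau>) j \<and> mg n J (bb h \<tau>) j \<le> 1" if "0 < h" "j < n" for h \<tau> j
    using mg_nonneg[OF Jn bbnn that(2)] mg_abs[OF that(2), where J=J and b="bb h \<tau>"] that(1) by auto
  have F01: "0 \<le> F h \<tau> \<and> F h \<tau> \<le> 1" if h: "0 < h" for h \<tau>
  proof -
    have "0 \<le> (\<Sum>j<n. (mg n J (bb h \<tau>) j) ^ k)" using mg01[OF h] by (intro sum_nonneg) auto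
    moreover have "(\<Sum>j<n. (mg n J (bb h \<tau>) j) ^ k) \<le> (\<Sum>j<n. 1)"
      using mg01[OF h] by (intro sum_mono power_le_one) auto
    ultimately show ?thesis unfolding OA using n1 by (simp add: divide_le_eq)
  qed
  have Fmono: "F h \<tau> \<le> F h (\<tau>(i := Suc (\<tau> i)))" if h: "0 < h" and i: "i \<in> {0..<n}" for h \<tau> i
  proof -
    have "(\<Sum>j<n. (mg n J (bb h \<tau>) j) ^ k) \<le> (\<Sum>j<n. (mg n J (bb h (\<tau>(i := Suc (\<tau> i)))) j) ^ k)"
    proof (intro sum_mono power_mono)
      fix j assume j: "j \<in> {..<n}"
      show "0 \<le> mg n J (bb h \<tau>) j" using mg01[OF h] j by auto
      show "mg n J (bb h \<tau>) j \<le> mg n J (bb h (\<tau>(i := Suc (\<tau> i)))) j"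
        unfolding mg_up using i j h h1 by (intro mg_mono Jn bbnn) auto
    qed
    then show ?thesis unfolding OA by (simp add: divide_right_mono)
  qed
  define dd where "dd i h \<tau> = (\<Sum>j<n. mg n J (bb h (\<tau>(i := Suc (\<tau> i)))) j) - (\<Sum>j<n. mg n J (bb h \<tau>) j)" for i h \<tau>
  define \<Phi> where "\<Phi> i h \<tau> = ln (Zf n J (bb h (\<tau>(i := Suc (\<tau> i))))) - ln (Zf n J (bb h \<tau>))" for i h \<tau>
  have Fdiff: "F h (\<tau>(i := Suc (\<tau> i))) - F h \<tau> \<le> real k / real n * dd i h \<tau>" if h: "0 < h" and i: "i \<in> {0..<n}" for h \<tau> i
  proof -
    have "F h (\<tau>(i := Suc (\<tau> i))) - F h \<tau> = (1 / real n) * (\<Sum>j<n. (mg n J (bb h (\<tau>(i := Suc (\<tau> i)))) j) ^ k - (mg n J (bb h \<tau>) j) ^ k)"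
      unfolding OA by (simp add: sum_subtractf right_diff_distrib)
    also have "\<dots> \<le> (1 / real n) * (\<Sum>j<n. real k * (mg n J (bb h (\<tau>(i := Suc (\<tau> i)))) j - mg n J (bb h \<tau>) j))"
    proof (intro mult_left_mono sum_mono pow_diff_le)
      fix j assume j: "j \<in> {..<n}"
      show "0 \<le> mg n J (bb h \<tau>) j" using mg01[OF h] j by auto
      show "mg n J (bb h \<tau>) j \<le> mg n J (bb h (\<tau>(i := Suc (\<tau> i)))) j"
        unfolding mg_up using i j h h1 by (intro mg_mono Jn bbnn) auto
      show "mg n J (bb h (\<tau>(i := Suc (\<tau> i)))) j \<le> 1" using mg01[OF h] j by auto
    qed simp
    also have "\<dots> = real k / real n * dd i h \<tau>"
      unfolding dd_def by (simp add: sum_distrib_left[symmetric] sum_subtractf)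
    finally show ?thesis .
  qed
  have ddb: "\<bar>dd i h \<tau>\<bar> \<le> 2 * real n" for i h \<tau>
  proof -
    have sb: "\<bar>\<Sum>j<n. mg n J b j\<bar> \<le> real n" for b
    proof -
      have "\<bar>\<Sum>j<n. mg n J b j\<bar> \<le> (\<Sum>j<n. \<bar>mg n J b j\<bar>)" by (rule sum_abs)
      also have "\<dots> \<le> (\<Sum>j<n. 1)" by (intro sum_mono mg_abs) auto
      finally show ?thesis by simp
    qed
    show ?thesis unfolding dd_def using sb[of "bb h (\<tau>(i := Suc (\<tau> i)))"] sb[of "bb h \<tau>"] by linarith
  qed
  have \<Phi>b: "\<bar>\<Phi> i h \<tau>\<bar> \<le> h1" if i: "i < n" for i h \<tau>
    unfolding \<Phi>_def Zf_up using logZ_lip[OF i, where J=J and b="bb h \<tau>" and s=h1] h1 by simp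
  have \<Phi>nn: "0 \<le> \<Phi> i h \<tau>" if i: "i < n" and h: "0 < h" for i h \<tau>
    unfolding \<Phi>_def Zf_up using logZ_mono[OF Jn _ i h1(1), where b="bb h \<tau>"] bbnn h by auto
  have D: "((\<lambda>s. \<Phi> i s \<tau>) has_real_derivative dd i h \<tau>) (at h)" for i h \<tau>
  proof -
    have e: "bb s \<sigma> = fpath (\<lambda>kk. h1 * real (\<sigma> kk)) (\<lambda>_. 1) s" for s \<sigma>
      unfolding bb_def fpath_def by (simp add: fun_eq_iff)
    define b1 where "b1 = (\<lambda>kk. h1 * real ((\<tau>(i := Suc (\<tau> i))) kk))"
    define b2 where "b2 = (\<lambda>kk. h1 * real (\<tau> kk))"
    have "((\<lambda>s. ln (Zf n J (fpath b1 (\<lambda>_. 1) s)) - ln (Zf n J (fpath b2 (\<lambda>_. 1) s))) has_real_derivative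
        (\<Sum>kk<n. 1 * mg n J (fpath b1 (\<lambda>_. 1) h) kk) - (\<Sum>kk<n. 1 * mg n J (fpath b2 (\<lambda>_. 1) h) kk)) (at h)"
      by (rule DERIV_diff[OF deriv_logZ deriv_logZ])
    then show ?thesis unfolding \<Phi>_def dd_def e b1_def b2_def by (simp only: mult_1)
  qed
  define \<Psi> where "\<Psi> i h = EE law (\<Phi> i h)" for i h
  have D\<Psi>: "(\<Psi> i has_real_derivative EE law (dd i h)) (at h)" if i: "i < n" for i h
    unfolding \<Psi>_def by (rule deriv_EE[OF D ddb \<Phi>b[OF i]])
  define G where "G h = lam * (real k / real n) * (\<Sum>i\<in>{0..<n}. \<Psi> i h)" for h
  define G' where "G' h = lam * (real k / real n) * (\<Sum>i\<in>{0..<n}. EE law (dd i h))" for h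
  have DG: "(G has_real_derivative G' h) (at h)" for h
    unfolding G_def G'_def
    by (intro DERIV_cmult DERIV_sum D\<Psi>) simp
  have FTC: "(G' has_integral (G hu - G hl)) {hl..hu}"
    by (rule fundamental_theorem_of_calculus[OF hl(2)])
       (use DG in \<open>auto simp: has_real_derivative_iff_has_vector_derivative intro: has_vector_derivative_at_within\<close>)
  define V where "V h0 = E_tau n \<alpha> \<theta> (\<lambda>\<tau>. (overlap_avg n k J h0 h1 \<tau> - E_tau n \<alpha> \<theta> (\<lambda>\<tau>'. overlap_avg n k J h0 h1 \<tau>'))\<^sup>2)" for h0
  have VG: "V h \<le> G' h" if h: "h \<in> {hl..hu}" for h
  proof -
    have h0: "0 < h" using h hl by auto
    have "V h = varp law (F h)" unfolding V_def varp_def E_tau_def law_def F_def ..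
    also have "\<dots> \<le> lam * (\<Sum>i\<in>{0..<n}. EE law (\<lambda>\<tau>. F h (\<tau>(i := Suc (\<tau> i))) - F h \<tau>))"
      unfolding law_eq
      by (rule ES[OF pois_1d[OF lam0] lam0]) (use F01[OF h0] Fmono[OF h0] in auto)
    also have "\<dots> \<le> lam * (\<Sum>i\<in>{0..<n}. EE law (\<lambda>\<tau>. real k / real n * dd i h \<tau>))"
    proof (intro mult_left_mono[OF _ lam0] sum_mono)
      fix i assume i: "i \<in> {0..<n}"
      show "EE law (\<lambda>\<tau>. F h (\<tau>(i := Suc (\<tau> i))) - F h \<tau>) \<le> EE law (\<lambda>\<tau>. real k / real n * dd i h \<tau>)"
      proof (rule EE_mono[where B="1 + 2 * real k"])
        fix \<tau>
        show "\<bar>F h (\<tau>(i := Suc (\<tau> i))) - F h \<tau>\<bar> \<le> 1 + 2 * real k"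
          using F01[OF h0, of \<tau>] F01[OF h0, of "\<tau>(i := Suc (\<tau> i))"] by auto
        have "\<bar>real k / real n * dd i h \<tau>\<bar> = real k / real n * \<bar>dd i h \<tau>\<bar>" by (simp add: abs_mult)
        also have "\<dots> \<le> real k / real n * (2 * real n)" by (intro mult_left_mono ddb) auto
        also have "\<dots> = 2 * real k" using n1 by simp
        finally show "\<bar>real k / real n * dd i h \<tau>\<bar> \<le> 1 + 2 * real k" by simp
        show "F h (\<tau>(i := Suc (\<tau> i))) - F h \<tau> \<le> real k / real n * dd i h \<tau>"
          by (rule Fdiff[OF h0 i])
      qed
    qed
    also have "(\<Sum>i\<in>{0..<n}. EE law (\<lambda>\<tau>. real k / real n * dd i h \<tau>)) = real k / real n * (\<Sum>i\<in>{0..<n}. EE law (dd i h))"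
      by (simp add: sum_distrib_left)
    also have "lam * (real k / real n * (\<Sum>i\<in>{0..<n}. EE law (dd i h))) = G' h" unfolding G'_def by (simp only: mult.assoc)
    finally show ?thesis .
  qed
  have GG: "G hu - G hl \<le> lam * real k * h1"
  proof -
    have "G hu - G hl = lam * (real k / real n) * (\<Sum>i\<in>{0..<n}. \<Psi> i hu - \<Psi> i hl)"
      unfolding G_def by (simp add: sum_subtractf right_diff_distrib)
    also have "\<dots> \<le> lam * (real k / real n) * (\<Sum>i\<in>{0..<n}. h1)"
    proof (intro mult_left_mono sum_mono)
      fix i assume i: "i \<in> {0..<n}"
      have "\<Psi> i hu \<le> h1" unfolding \<Psi>_def using EE_bdd[where f="\<Phi> i hu" and B=h1 and p=law] \<Phi>b i by auto
      moreover have "0 \<le> \<Psi> i hl" unfolding \<Psi>_def using \<Phi>nn i hl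
        by (intro Bochner_Integration.integral_nonneg) auto
      ultimately show "\<Psi> i hu - \<Psi> i hl \<le> h1" by simp
    qed (use lam0 in auto)
    also have "\<dots> = lam * real k * h1" using n1 by simp
    finally show ?thesis .
  qed
  have RHS: "\<alpha> * real k * h1 / real n powr (1 - \<theta>) = lam * real k * h1"
  proof -
    have "real n powr (\<theta> - 1) = 1 / real n powr (1 - \<theta>)"
      using n1 by (simp add: powr_minus_divide[symmetric])
    then show ?thesis unfolding lam_def by simp
  qed
  have RHSnn: "0 \<le> lam * real k * h1" using lam0 h1 by simp
  show ?thesis
  proof (cases "V integrable_on {hl..hu}")
    case True
    have "integral {hl..hu} V \<le> integral {hl..hu} G'"
      by (rule integral_le[OF True has_integral_integrable[OF FTC]]) (rule VG)
    also have "\<dots> = G hu - G hl" using FTC by (rule integral_unique)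
    finally show ?thesis unfolding V_def[symmetric] RHS using GG by simp
  next
    case False
    then have "integral {hl..hu} V = 0" by (rule not_integrable_integral)
    then show ?thesis unfolding V_def[symmetric] RHS using RHSnn by simp
  qed
qed

end
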